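(* In the setting below, for any epoch $t$ and all honest nodes $k\in\mathcal{G}$: (a) $\|\mu_t^{(k)}-\nabla f(\tilde{x}_{t-1})\|\le\mathcal{V}$; (b) $\|\mu_t^{(k)}-\mu_t^{\mathrm{med}}\|\le4\mathcal{V}$ and $\|\mu_t^{\mathrm{med}}-\nabla f(\tilde{x}_{t-1})\|\le3\mathcal{V}$.
   Context: Setting: $f(x)=\mathbb{E}_{\xi\sim\mathcal{D}}f(x;\xi)$ with $\|\nabla f(x;\xi)-\nabla f(x)\|\le\mathcal{V}$ for all $x$ and all $\xi\sim\mathcal{D}$. There are $K$ worker nodes; the honest set $\mathcal{G}$ satisfies $|\mathcal{G}|\ge(1-\alpha)K$ with $\alpha\in[0,1/2)$, others Byzantine. At epoch $t$, each $k\in\mathcal{G}$ sends $\mu_t^{(k)}=\frac{1}{B_t}\sum_{i=1}^{B_t}\nabla f(\tilde{x}_{t-1};\xi_{t,i}^{(k)})$ with $\xi_{t,i}^{(k)}\sim\mathcal{D}$; each Byzantine node sends an arbitrary vector. Here $\mu_t^{\mathrm{med}}$ is defined (as in the fallback rule of the algorithm) as $\mu_t^{(k)}$ for any node $k$ such that $|\{k'\in[K]:\|\mu_t^{(k')}-\mu_t^{(k)}\|\le2\mathcal{V}\}|>K/2$. *)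

theory Defs
  imports "HOL-Probability.Probability"
begin

text \<open>Node m (among nodes 0..K-1) is an admissible choice for mu_med:
  more than K/2 nodes k' satisfy norm (mu k' - mu m) \<le> 2V.\<close>
definition is_med_node :: "(nat \<Rightarrow> 'a::real_normed_vector) \<Rightarrow> nat \<Rightarrow> real \<Rightarrow> nat \<Rightarrow> bool" where
  "is_med_node mu K V m \<longleftrightarrow>
     m < K \<and> real (card {k'. k' < K \<and> norm (mu k' - mu m) \<le> 2 * V}) > real K / 2"

end

theory Submission
  imports Defs
begin

lemma avg_bound:
  fixes g :: "'a::real_normed_vector" and f :: "nat \<Rightarrow> 'a"
  assumes "n \<ge> 1" "\<And>i. norm (f i - g) \<le> V"
  shows "norm ((1 / real n) *\<^sub>R (\<Sum>i\<in>{1..n}. f i) - g) \<le> V"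
proof -
  have "(1 / real n) *\<^sub>R (\<Sum>i\<in>{1..n}. f i) - g = (1 / real n) *\<^sub>R (\<Sum>i\<in>{1..n}. f i - g)"
    using assms(1) by (simp add: sum_subtractf scaleR_diff_right)
      (simp add: sum_constant_scaleR)
  also have "norm \<dots> = (1 / real n) * norm (\<Sum>i\<in>{1..n}. f i - g)" by simp
  also have "\<dots> \<le> (1 / real n) * (\<Sum>i\<in>{1..n}. norm (f i - g))"
    by (intro mult_left_mono norm_sum) auto
  also have "\<dots> \<le> (1 / real n) * (\<Sum>i\<in>{1..n}. V)"
    by (intro mult_left_mono sum_mono assms(2)) auto
  also have "\<dots> = V" using assms(1) by simp
  finally show ?thesis .
qed

lemma card_inter_nonempty:
  assumes "A \<subseteq> {..<K}" "B \<subseteq> {..<K}" "real (card A) > real K / 2" "real (card B) > real K / 2"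
  shows "A \<inter> B \<noteq> {}"
proof
  assume "A \<inter> B = {}"
  have fA: "finite A" "finite B" using assms finite_subset by auto
  have "card (A \<union> B) = card A + card B" using \<open>A \<inter> B = {}\<close> fA card_Un_disjoint by blast
  moreover have "card (A \<union> B) \<le> K" using assms card_mono[of "{..<K}" "A \<union> B"] by auto
  ultimately show False using assms by linarith
qed

theorem lemma6:
  fixes D :: "'xi pmf"
    and sgrad :: "'a::real_normed_vector \<Rightarrow> 'xi \<Rightarrow> 'a"
    and grad :: "'a \<Rightarrow> 'a"
    and V :: real and K :: nat and G :: "nat set" and \<alpha> :: real
    and B :: "nat \<Rightarrow> nat" and xt :: "nat \<Rightarrow> 'a"
    and \<xi> :: "nat \<Rightarrow> nat \<Rightarrow> nat \<Rightarrow> 'xi"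
    and \<mu> :: "nat \<Rightarrow> nat \<Rightarrow> 'a"
    and t :: nat
  assumes bounded_var: "\<And>x s. s \<in> set_pmf D \<Longrightarrow> norm (sgrad x s - grad x) \<le> V"
    and alpha: "0 \<le> \<alpha>" "\<alpha> < 1/2"
    and G_sub: "G \<subseteq> {..<K}"
    and G_card: "real (card G) \<ge> (1 - \<alpha>) * real K"
    and t_pos: "t \<ge> 1"
    and batch: "\<And>t. B t \<ge> 1"
    and samples: "\<And>t i k. k \<in> G \<Longrightarrow> \<xi> t i k \<in> set_pmf D"
    and honest: "\<And>t k. k \<in> G \<Longrightarrow>
        \<mu> t k = (1 / real (B t)) *\<^sub>R (\<Sum>i\<in>{1..B t}. sgrad (xt (t - 1)) (\<xi> t i k))"
  shows "\<forall>k\<in>G.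
     norm (\<mu> t k - grad (xt (t - 1))) \<le> V
   \<and> (\<exists>m. is_med_node (\<mu> t) K V m)
   \<and> (\<forall>m. is_med_node (\<mu> t) K V m \<longrightarrow>
          norm (\<mu> t k - \<mu> t m) \<le> 4 * V \<and> norm (\<mu> t m - grad (xt (t - 1))) \<le> 3 * V)"
proof
  fix k assume kG: "k \<in> G"
  define g where "g = grad (xt (t - 1))"
  have A: "\<And>j. j \<in> G \<Longrightarrow> norm (\<mu> t j - g) \<le> V"
    unfolding g_def using honest avg_bound[OF batch] bounded_var samples by metis
  have close: "\<And>i j. i \<in> G \<Longrightarrow> j \<in> G \<Longrightarrow> norm (\<mu> t i - \<mu> t j) \<le> 2 * V"
  proof -
    fix i j assume "i \<in> G" "j \<in> G"
    have "norm (\<mu> t i - \<mu> t j) \<le> norm (\<mu> t i - g) + norm (\<mu> t j - g)"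
      by (metis norm_triangle_ineq4 diff_diff_eq2 diff_add_cancel add_diff_eq norm_minus_commute)
    moreover have "norm (\<mu> t i - g) \<le> V" "norm (\<mu> t j - g) \<le> V" using A \<open>i \<in> G\<close> \<open>j \<in> G\<close> by auto
    ultimately show "norm (\<mu> t i - \<mu> t j) \<le> 2 * V" by linarith
  qed
  have K0: "K > 0" using kG G_sub by auto
  have cardG: "real (card G) > real K / 2"
  proof -
    have "(1 - \<alpha>) * real K > (1/2) * real K" using alpha K0 by (intro mult_strict_right_mono) auto
    then show ?thesis using G_card by linarith
  qed
  have finG: "finite G" using G_sub finite_subset by auto
  have med: "is_med_node (\<mu> t) K V k"
  proof -
    have "G \<subseteq> {k'. k' < K \<and> norm (\<mu> t k' - \<mu> t k) \<le> 2 * V}" using G_sub close kG by auto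
    then have "card G \<le> card {k'. k' < K \<and> norm (\<mu> t k' - \<mu> t k) \<le> 2 * V}"
      by (intro card_mono) auto
    then show ?thesis unfolding is_med_node_def using cardG kG G_sub by auto
  qed
  have rest: "norm (\<mu> t k - \<mu> t m) \<le> 4 * V \<and> norm (\<mu> t m - g) \<le> 3 * V"
    if m: "is_med_node (\<mu> t) K V m" for m
  proof -
    let ?S = "{k'. k' < K \<and> norm (\<mu> t k' - \<mu> t m) \<le> 2 * V}"
    have "?S \<inter> G \<noteq> {}"
      using m G_sub cardG unfolding is_med_node_def by (intro card_inter_nonempty[of _ K]) auto
    then obtain j where j: "j \<in> G" "norm (\<mu> t j - \<mu> t m) \<le> 2 * V" by auto
    have "norm (\<mu> t k - \<mu> t m) \<le> norm (\<mu> t k - \<mu> t j) + norm (\<mu> t j - \<mu> t m)"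
      using norm_triangle_ineq[of "\<mu> t k - \<mu> t j" "\<mu> t j - \<mu> t m"] by simp
    moreover have "norm (\<mu> t m - g) \<le> norm (\<mu> t j - \<mu> t m) + norm (\<mu> t j - g)"
      using norm_triangle_ineq[of "\<mu> t m - \<mu> t j" "\<mu> t j - g"]
      by (simp add: norm_minus_commute)
    ultimately show ?thesis using j close[OF kG j(1)] A[OF j(1)] by linarith
  qed
  show "norm (\<mu> t k - grad (xt (t - 1))) \<le> V
   \<and> (\<exists>m. is_med_node (\<mu> t) K V m)
   \<and> (\<forall>m. is_med_node (\<mu> t) K V m \<longrightarrow>
          norm (\<mu> t k - \<mu> t m) \<le> 4 * V \<and> norm (\<mu> t m - grad (xt (t - 1))) \<le> 3 * V)"
    using A[OF kG] med rest unfolding g_def by blast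
qed

end
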